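(* Let $\vec q\subseteq\mathrm{qVars}$, let $Q$ be an orthogonal projection on $\mathcal H_{\vec q}$, and $Q^\perp=I-Q$. (a) (H.boostRep) For any $p\in(0,1)$ and $\varepsilon\in(0,p)$, $$\{pI,\;I\}\,\square\,\{Q_{\vec q},\;I\}\ \hookrightarrow_{\mathrm{tot}}^{*}\ \mathbf{repeat}\ \lceil\log_{1-\varepsilon}(1-p)\rceil\ \mathbf{do}\ \big(\mathbf{if}\ Q^\perp[\vec q]\ \mathbf{then}\ \{\varepsilon Q^\perp_{\vec q},\;Q^\perp_{\vec q}\}\,\square\,\{Q_{\vec q},\;I\}\big).$$ (b) (H.boostWhile) For any $\varepsilon\in(0,1)$, $$\{I\}\,\square\,\{Q_{\vec q}\}\ \hookrightarrow_{\mathrm{tot}}^{*}\ \mathbf{while}\ Q^\perp[\vec q]\ \mathbf{do}\ \{\varepsilon Q^\perp_{\vec q},\;Q^\perp_{\vec q}\}\,\square\,\{Q_{\vec q},\;I\}.$$ Here $\{P,P'\}\square\{Q,Q'\}$ denotes a single hole carrying the two specifications $(P,Q)$ and $(P',Q')$.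
   Context: Quantum setting. There is a finite set $\mathrm{qVars}$ of quantum variables; each $q$ has Hilbert space $\mathcal H_q=\mathbb C^{\Sigma_q}$ ($\Sigma_q$ finite) with standard orthonormal basis $\{|x\rangle\}_{x\in\Sigma_q}$. For a set $\vec q\subseteq\mathrm{qVars}$, $\mathcal H_{\vec q}=\bigotimes_{q\in\vec q}\mathcal H_q$ with standard basis labelled by $\Sigma_{\vec q}=\prod_{q\in\vec q}\Sigma_q$, and $\mathcal H=\mathcal H_{\mathrm{qVars}}$. For an operator $A$ on $\mathcal H_{\vec q}$, $A_{\vec q}=A\otimes I$ on $\mathcal H$. $\preceq$ is the Löwner order. A partial state is a positive semidefinite (PSD) $\rho$ on $\mathcal H$ with $\operatorname{tr}\rho\le1$. A predicate is an operator $P$ on $\mathcal H$ with $0\preceq P\preceq I$; "$P\Rightarrow Q$" means $P\preceq Q$. A measurement on $\vec q$ is a family $\vec M=\{M_\omega\}_{\omega\in\Omega}$ ($\Omega$ finite) of PSD operators on $\mathcal H_{\vec q}$ with $\sum_\omega M_\omega=I$; write $\mathcal M_{\omega}(X)=\sqrt{M_{\omega,\vec q}}\,X\,\sqrt{M_{\omega,\vec q}}$. A binary measurement is given by an operator $B$ on $\mathcal H_{\vec q}$ with $0\preceq B\preceq I$, and $\mathcal B_{0,\vec q}(X)=\sqrt{(I-B)_{\vec q}}\,X\sqrt{(I-B)_{\vec q}}$, $\mathcal B_{1,\vec q}(X)=\sqrt{B_{\vec q}}\,X\sqrt{B_{\vec q}}$. Quantum while language: $S::=\mathbf{skip}\mid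 \vec q:=|0\rangle\mid \vec q\mathrel{*}=U\mid S_1;S_2\mid \mathbf{repeat}\ N\ \mathbf{do}\ S\mid \mathbf{case}\ \vec M[\vec q]\ \mathbf{of}\ \{\omega: S_\omega\}_{\omega\in\Omega}\mid \mathbf{while}\ B[\vec q]\ \mathbf{do}\ S$, with $U$ unitary on $\mathcal H_{\vec q}$, $N\in\mathbb N$. Denotational semantics $[\![S]\!]$ on partial states: $[\![\mathbf{skip}]\!](\rho)=\rho$; $[\![\vec q:=|0\rangle]\!](\rho)=\sum_{x\in\Sigma_{\vec q}}|0\rangle\langle x|_{\vec q}\,\rho\,|x\rangle\langle0|_{\vec q}$; $[\![\vec q\mathrel{*}=U]\!](\rho)=U_{\vec q}\rho U_{\vec q}^\dagger$; $[\![S_1;S_2]\!]=[\![S_2]\!]\circ[\![S_1]\!]$; $[\![\mathbf{repeat}\ N\ \mathbf{do}\ S]\!]=[\![S]\!]^N$; $[\![\mathbf{case}\ldots]\!](\rho)=\sum_\omega[\![S_\omega]\!](\mathcal M_\omega(\rho))$; $[\![\mathbf{while}\ B[\vec q]\ \mathbf{do}\ S]\!](\rho)=\sum_{k\ge0}(\mathcal B_{0,\vec q}\circ([\![S]\!]\circ\mathcal B_{1,\vec q})^k)(\rho)$. Hoare triples: $\models_{\mathrm{tot}}\{P\}S\{Q\}$ iff $\operatorname{tr}(P\rho)\le\operatorname{tr}(Q[\![S]\!](\rho))$ for all partial states $\rho$; $\models_{\mathrm{par}}\{P\}S\{Q\}$ iff $\operatorname{tr}(P\rho)\le\operatorname{tr}(Q[\![S]\!](\rho))+\operatorname{tr}\rho-\operatorname{tr}[\![S]\!](\rho)$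 for all partial states $\rho$. Syntactic sugar: $\mathbf{if}\ B[\vec q]\ \mathbf{then}\ S_1\ \mathbf{else}\ S_0$ abbreviates $\mathbf{case}\ \{1:B,0:I-B\}[\vec q]\ \mathbf{of}\ \{1:S_1,0:S_0\}$; omitting else means $S_0=\mathbf{skip}$. Programs with holes. The grammar is extended by holes $\{P\}\,\square\,\{Q\}$ ($P,Q$ predicates); more generally a hole may carry a family of specifications $\{P_\lambda\}\,\square\,\{Q_\lambda\}$, $\lambda\in\Lambda$ (written e.g. $\{P,P'\}\square\{Q,Q'\}$ for two). A program without holes is concrete. A refinement rule applied to a hole with a family must have its side conditions satisfied for every $\lambda$; the predicates it introduces may depend on $\lambda$, but the syntactic program produced (variables, unitaries, measurements, $N$, $B$) is the same for all $\lambda$; holes it creates carry the families indexed by $\lambda$ together with any newly introduced index. Refinement for partial correctness $\hookrightarrow_{\mathrm{par}}$ (for predicates $P,Q$): (H.skip) $\{P\}\square\{Q\}\hookrightarrow\mathbf{skip}$ if $P\Rightarrow Q$; (H.init) $\{P\}\square\{Q\}\hookrightarrow\vec q:=|0\rangle$ if $P\Rightarrow\sum_{x\in\Sigma_{\vec q}}|x\rangle\langle0|_{\vec q}Q|0\rangle\langle x|_{\vec q}$; (H.unit) $\{P\}\square\{Q\}\hookrightarrow\vec q\mathrel{*}=U$ if $P\Rightarrow U_{\vec q}^\dagger QU_{\vec q}$; (H.seq) $\{P\}\square\{Q\}\hookrightarrow\{P\}\square\{R\};\{R\}\square\{Q\}$ for any predicate $R$; (HP.split) $\{P\}\square\{Q\}\hookrightarrow\{P_\gamma\}\square\{Q_\gamma\}$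 ($\gamma\in\Gamma$) if $P\Rightarrow\sum_\gamma p_\gamma P_\gamma$ and $\sum_\gamma p_\gamma Q_\gamma\Rightarrow Q$ for a probability distribution $(p_\gamma)$; (H.repeat) $\{P\}\square\{Q\}\hookrightarrow\mathbf{repeat}\ N\ \mathbf{do}\ \{R_j\}\square\{R_{j+1}\}$ (family over $j\in\{0,\dots,N-1\}$) for predicates $R_0,\dots,R_N$ with $P\Rightarrow R_0$, $R_N\Rightarrow Q$; (H.case) $\{P\}\square\{Q\}\hookrightarrow\mathbf{case}\ \vec M[\vec q]\ \mathbf{of}\ \{\omega:\{P_\omega\}\square\{Q\}\}_{\omega}$ if $P\Rightarrow\sum_\omega\mathcal M_\omega(P_\omega)$; (HP.while) $\{P\}\square\{Q\}\hookrightarrow\mathbf{while}\ B[\vec q]\ \mathbf{do}\ \{R\}\square\{\mathcal B_{0,\vec q}(Q)+\mathcal B_{1,\vec q}(R)\}$ for a predicate $R$ with $P\Rightarrow\mathcal B_{0,\vec q}(Q)+\mathcal B_{1,\vec q}(R)$. Composite rules: (C.seqL/C.seqR/C.repeat/C.case/C.while) if $S'\hookrightarrow S$ then replacing one occurrence of $S'$ as the left or right component of a sequence, the body of a repeat, one branch of a case, or the body of a while by $S$ is a refinement step. Refinement for total correctness $\hookrightarrow_{\mathrm{tot}}$ uses all (H.* ) and (C.* ) rules above but replaces (HP.while) by (HT.while): $\{P\}\square\{Q\}\hookrightarrow\mathbf{while}\ B[\vec q]\ \mathbf{do}\ \{R_{n+1}\}\square\{\mathcal B_{0,\vec q}(Q)+\mathcal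 B_{1,\vec q}(R_n)\}$ (family over $n\in\mathbb N$) for predicates $(R_n)_{n\in\mathbb N}$ with $R_0=0$, $R_n\Rightarrow R_{n+1}$, whose limit $R=\lim_n R_n$ satisfies $P\Rightarrow\mathcal B_{0,\vec q}(Q)+\mathcal B_{1,\vec q}(R)$; and replaces (HP.split) by (HT.split), identical except that $(p_\gamma)$ need only be nonnegative reals. $\hookrightarrow^k$ denotes $k$ steps and $\hookrightarrow^*$ the reflexive-transitive closure. *)

theory Defs
  imports "HOL-Analysis.Analysis"
begin

text \<open>An operator is represented by its matrix (kernel) with respect to the standard
basis. The standard basis of H_qs (qs a set of quantum variables, with alphabets
Sigma) is the set of assignments PiE qs Sigma; entries outside the basis are
irrelevant (all notions below only look at entries indexed by the basis).\<close>

type_synonym ('v,'a) op = "('v \<Rightarrow> 'a) \<Rightarrow> ('v \<Rightarrow> 'a) \<Rightarrow> complex"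

definition opadd :: "('v,'a) op \<Rightarrow> ('v,'a) op \<Rightarrow> ('v,'a) op" where
  "opadd A C = (\<lambda>x y. A x y + C x y)"

definition opsub :: "('v,'a) op \<Rightarrow> ('v,'a) op \<Rightarrow> ('v,'a) op" where
  "opsub A C = (\<lambda>x y. A x y - C x y)"

definition opscale :: "complex \<Rightarrow> ('v,'a) op \<Rightarrow> ('v,'a) op" where
  "opscale c A = (\<lambda>x y. c * A x y)"

definition opzero :: "('v,'a) op" where
  "opzero = (\<lambda>x y. 0)"

definition opsum :: "'i set \<Rightarrow> ('i \<Rightarrow> ('v,'a) op) \<Rightarrow> ('v,'a) op" where
  "opsum I f = (\<lambda>x y. \<Sum>i\<in>I. f i x y)"

definition mmult :: "('v \<Rightarrow> 'a) set \<Rightarrow> ('v,'a) op \<Rightarrow> ('v,'a) op \<Rightarrow> ('v,'a) op" where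
  "mmult B A C = (\<lambda>x y. \<Sum>z\<in>B. A x z * C z y)"

definition adj :: "('v,'a) op \<Rightarrow> ('v,'a) op" where
  "adj A = (\<lambda>x y. cnj (A y x))"

definition ident :: "('v \<Rightarrow> 'a) set \<Rightarrow> ('v,'a) op" where
  "ident B = (\<lambda>x y. if x \<in> B \<and> x = y then 1 else 0)"

definition eq_on :: "('v \<Rightarrow> 'a) set \<Rightarrow> ('v,'a) op \<Rightarrow> ('v,'a) op \<Rightarrow> bool" where
  "eq_on B A C \<longleftrightarrow> (\<forall>x\<in>B. \<forall>y\<in>B. A x y = C x y)"

definition psd :: "('v \<Rightarrow> 'a) set \<Rightarrow> ('v,'a) op \<Rightarrow> bool" where
  "psd B A \<longleftrightarrow> (\<forall>x\<in>B. \<forall>y\<in>B. A x y = cnj (A y x)) \<and>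
     (\<forall>\<psi> :: ('v \<Rightarrow> 'a) \<Rightarrow> complex.
        0 \<le> Re (\<Sum>x\<in>B. \<Sum>y\<in>B. cnj (\<psi> x) * A x y * \<psi> y))"

definition loewner :: "('v \<Rightarrow> 'a) set \<Rightarrow> ('v,'a) op \<Rightarrow> ('v,'a) op \<Rightarrow> bool" where
  "loewner B A C \<longleftrightarrow> psd B (opsub C A)"

definition op_sqrt :: "('v \<Rightarrow> 'a) set \<Rightarrow> ('v,'a) op \<Rightarrow> ('v,'a) op" where
  "op_sqrt B A = (THE S. psd B S \<and> (\<forall>x y. x \<notin> B \<or> y \<notin> B \<longrightarrow> S x y = 0)
                       \<and> eq_on B (mmult B S S) A)"

definition unitary_op :: "('v \<Rightarrow> 'a) set \<Rightarrow> ('v,'a) op \<Rightarrow> bool" where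
  "unitary_op B U \<longleftrightarrow> eq_on B (mmult B (adj U) U) (ident B) \<and> eq_on B (mmult B U (adj U)) (ident B)"

definition orth_proj :: "('v \<Rightarrow> 'a) set \<Rightarrow> ('v,'a) op \<Rightarrow> bool" where
  "orth_proj B P \<longleftrightarrow> eq_on B (adj P) P \<and> eq_on B (mmult B P P) P"

definition ketbra :: "('v \<Rightarrow> 'a) \<Rightarrow> ('v \<Rightarrow> 'a) \<Rightarrow> ('v,'a) op" where
  "ketbra a b = (\<lambda>u w. if u = a \<and> w = b then 1 else 0)"

text \<open>Quantum variables form the finite type 'v (qVars = UNIV); variable v has
alphabet Sigma v (finite, containing the distinguished label 0).\<close>

definition wf_alph :: "('v::finite \<Rightarrow> 'a::zero set) \<Rightarrow> bool" where
  "wf_alph \<Sigma> \<longleftrightarrow> (\<forall>v. finite (\<Sigma> v) \<and> 0 \<in> \<Sigma> v)"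

definition bas :: "('v \<Rightarrow> 'a set) \<Rightarrow> 'v set \<Rightarrow> ('v \<Rightarrow> 'a) set" where
  "bas \<Sigma> qs = PiE qs \<Sigma>"

abbreviation full :: "('v \<Rightarrow> 'a set) \<Rightarrow> ('v \<Rightarrow> 'a) set" where
  "full \<Sigma> \<equiv> bas \<Sigma> UNIV"

definition zero_st :: "'v set \<Rightarrow> ('v \<Rightarrow> 'a::zero)" where
  "zero_st qs = restrict (\<lambda>_. 0) qs"

text \<open>A_qs = A \<otimes> I on the full space H.\<close>
definition lift :: "('v \<Rightarrow> 'a set) \<Rightarrow> 'v set \<Rightarrow> ('v,'a) op \<Rightarrow> ('v,'a) op" where
  "lift \<Sigma> qs A = (\<lambda>x y. if x \<in> full \<Sigma> \<and> y \<in> full \<Sigma> \<and> (\<forall>v. v \<notin> qs \<longrightarrow> x v = y v)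
                         then A (restrict x qs) (restrict y qs) else 0)"

abbreviation Id_full :: "('v \<Rightarrow> 'a set) \<Rightarrow> ('v,'a) op" where
  "Id_full \<Sigma> \<equiv> ident (full \<Sigma>)"

definition predicate :: "('v \<Rightarrow> 'a set) \<Rightarrow> ('v,'a) op \<Rightarrow> bool" where
  "predicate \<Sigma> P \<longleftrightarrow> loewner (full \<Sigma>) opzero P \<and> loewner (full \<Sigma>) P (Id_full \<Sigma>)"

definition sandw :: "('v \<Rightarrow> 'a set) \<Rightarrow> 'v set \<Rightarrow> ('v,'a) op \<Rightarrow> ('v,'a) op \<Rightarrow> ('v,'a) op" where
  "sandw \<Sigma> qs A X = (let S = op_sqrt (full \<Sigma>) (lift \<Sigma> qs A)
                       in mmult (full \<Sigma>) (mmult (full \<Sigma>) S X) S)"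

definition B0 :: "('v \<Rightarrow> 'a set) \<Rightarrow> 'v set \<Rightarrow> ('v,'a) op \<Rightarrow> ('v,'a) op \<Rightarrow> ('v,'a) op" where
  "B0 \<Sigma> qs B X = sandw \<Sigma> qs (opsub (ident (bas \<Sigma> qs)) B) X"

definition B1 :: "('v \<Rightarrow> 'a set) \<Rightarrow> 'v set \<Rightarrow> ('v,'a) op \<Rightarrow> ('v,'a) op \<Rightarrow> ('v,'a) op" where
  "B1 \<Sigma> qs B X = sandw \<Sigma> qs B X"

definition measurement :: "('v \<Rightarrow> 'a set) \<Rightarrow> 'v set \<Rightarrow> ('v,'a) op list \<Rightarrow> bool" where
  "measurement \<Sigma> qs Ms \<longleftrightarrow> (\<forall>M\<in>set Ms. psd (bas \<Sigma> qs) M) \<and>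
     eq_on (bas \<Sigma> qs) (opsum {..<length Ms} (\<lambda>i. Ms ! i)) (ident (bas \<Sigma> qs))"

text \<open>A hole carries a set of specifications (pre, post). Case statements carry a list
of (measurement operator, branch) pairs; the outcome set Omega is the index set of the list.\<close>

datatype ('v,'a) prog =
    Skip
  | Init "'v set"
  | Unit "'v set" "('v,'a) op"
  | Seq "('v,'a) prog" "('v,'a) prog"
  | Repeat nat "('v,'a) prog"
  | Case "'v set" "(('v,'a) op \<times> ('v,'a) prog) list"
  | While "'v set" "('v,'a) op" "('v,'a) prog"
  | Hole "(('v,'a) op \<times> ('v,'a) op) set"

definition IfThenElse :: "('v \<Rightarrow> 'a set) \<Rightarrow> 'v set \<Rightarrow> ('v,'a) op \<Rightarrow> ('v,'a) prog \<Rightarrow> ('v,'a) prog \<Rightarrow> ('v,'a) prog" where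
  "IfThenElse \<Sigma> qs B S1 S0 = Case qs [(B, S1), (opsub (ident (bas \<Sigma> qs)) B, S0)]"

definition IfThen :: "('v \<Rightarrow> 'a set) \<Rightarrow> 'v set \<Rightarrow> ('v,'a) op \<Rightarrow> ('v,'a) prog \<Rightarrow> ('v,'a) prog" where
  "IfThen \<Sigma> qs B S1 = IfThenElse \<Sigma> qs B S1 Skip"

type_synonym ('v,'a) spec = "('v,'a) op \<times> ('v,'a) op"

text \<open>One application of an (H.*) rule (total-correctness version) to a hole carrying the
family of specifications F. Predicates introduced by a rule may depend on the specification
s = (P,Q) \<in> F; the produced program syntax does not.\<close>

definition hole_ref_tot :: "('v::finite \<Rightarrow> 'a::zero set) \<Rightarrow> ('v,'a) spec set \<Rightarrow> ('v,'a) prog \<Rightarrow> bool" where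
  "hole_ref_tot \<Sigma> F S \<longleftrightarrow>
    \<comment> \<open>H.skip\<close>
    (S = Skip \<and> (\<forall>(P,Q)\<in>F. loewner (full \<Sigma>) P Q))
  \<or> \<comment> \<open>H.init\<close>
    (\<exists>qs. S = Init qs \<and> (\<forall>(P,Q)\<in>F. loewner (full \<Sigma>) P
        (opsum (bas \<Sigma> qs) (\<lambda>x. mmult (full \<Sigma>) (mmult (full \<Sigma>)
             (lift \<Sigma> qs (ketbra x (zero_st qs))) Q) (lift \<Sigma> qs (ketbra (zero_st qs) x))))))
  \<or> \<comment> \<open>H.unit\<close>
    (\<exists>qs U. S = Unit qs U \<and> unitary_op (bas \<Sigma> qs) U \<and>
        (\<forall>(P,Q)\<in>F. loewner (full \<Sigma>) P
           (mmult (full \<Sigma>) (mmult (full \<Sigma>) (adj (lift \<Sigma> qs U)) Q) (lift \<Sigma> qs U))))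
  \<or> \<comment> \<open>H.seq\<close>
    (\<exists>R :: ('v,'a) spec \<Rightarrow> ('v,'a) op.
        (\<forall>s\<in>F. predicate \<Sigma> (R s)) \<and>
        S = Seq (Hole ((\<lambda>s. (fst s, R s)) ` F)) (Hole ((\<lambda>s. (R s, snd s)) ` F)))
  \<or> \<comment> \<open>HT.split (finite index set, nonnegative weights)\<close>
    (\<exists>(\<Gamma>::nat set) (p :: ('v,'a) spec \<Rightarrow> nat \<Rightarrow> real) (P' :: ('v,'a) spec \<Rightarrow> nat \<Rightarrow> ('v,'a) op)
        (Q' :: ('v,'a) spec \<Rightarrow> nat \<Rightarrow> ('v,'a) op).
        finite \<Gamma> \<and>
        (\<forall>s\<in>F. \<forall>g\<in>\<Gamma>. 0 \<le> p s g \<and> predicate \<Sigma> (P' s g) \<and> predicate \<Sigma> (Q' s g)) \<and>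
        (\<forall>s\<in>F. loewner (full \<Sigma>) (fst s) (opsum \<Gamma> (\<lambda>g. opscale (complex_of_real (p s g)) (P' s g)))) \<and>
        (\<forall>s\<in>F. loewner (full \<Sigma>) (opsum \<Gamma> (\<lambda>g. opscale (complex_of_real (p s g)) (Q' s g))) (snd s)) \<and>
        S = Hole {(P' s g, Q' s g) | s g. s \<in> F \<and> g \<in> \<Gamma>})
  \<or> \<comment> \<open>H.repeat\<close>
    (\<exists>(N::nat) (R :: ('v,'a) spec \<Rightarrow> nat \<Rightarrow> ('v,'a) op).
        (\<forall>s\<in>F. (\<forall>j\<le>N. predicate \<Sigma> (R s j)) \<and>
                loewner (full \<Sigma>) (fst s) (R s 0) \<and> loewner (full \<Sigma>) (R s N) (snd s)) \<and>
        S = Repeat N (Hole {(R s j, R s (Suc j)) | s j. s \<in> F \<and> j < N}))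
  \<or> \<comment> \<open>H.case\<close>
    (\<exists>qs Ms (Pw :: ('v,'a) spec \<Rightarrow> nat \<Rightarrow> ('v,'a) op).
        measurement \<Sigma> qs Ms \<and>
        (\<forall>s\<in>F. (\<forall>i<length Ms. predicate \<Sigma> (Pw s i)) \<and>
           loewner (full \<Sigma>) (fst s) (opsum {..<length Ms} (\<lambda>i. sandw \<Sigma> qs (Ms ! i) (Pw s i)))) \<and>
        S = Case qs (map (\<lambda>i. (Ms ! i, Hole ((\<lambda>s. (Pw s i, snd s)) ` F))) [0..<length Ms]))
  \<or> \<comment> \<open>HT.while\<close>
    (\<exists>qs B (R :: ('v,'a) spec \<Rightarrow> nat \<Rightarrow> ('v,'a) op).
        loewner (bas \<Sigma> qs) opzero B \<and> loewner (bas \<Sigma> qs) B (ident (bas \<Sigma> qs)) \<and>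
        (\<forall>s\<in>F. R s 0 = opzero \<and> (\<forall>n. predicate \<Sigma> (R s n)) \<and>
           (\<forall>n. loewner (full \<Sigma>) (R s n) (R s (Suc n))) \<and>
           (\<exists>Rlim. (\<forall>x\<in>full \<Sigma>. \<forall>y\<in>full \<Sigma>. (\<lambda>n. R s n x y) \<longlonglongrightarrow> Rlim x y) \<and>
              loewner (full \<Sigma>) (fst s) (opadd (B0 \<Sigma> qs B (snd s)) (B1 \<Sigma> qs B Rlim)))) \<and>
        S = While qs B (Hole {(R s (Suc n), opadd (B0 \<Sigma> qs B (snd s)) (B1 \<Sigma> qs B (R s n)))
                               | s n. s \<in> F}))"

inductive ref_tot :: "('v::finite \<Rightarrow> 'a::zero set) \<Rightarrow> ('v,'a) prog \<Rightarrow> ('v,'a) prog \<Rightarrow> bool"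
  for \<Sigma> where
  hole: "hole_ref_tot \<Sigma> F S \<Longrightarrow> ref_tot \<Sigma> (Hole F) S"
| seqL: "ref_tot \<Sigma> S1 S1' \<Longrightarrow> ref_tot \<Sigma> (Seq S1 S2) (Seq S1' S2)"
| seqR: "ref_tot \<Sigma> S2 S2' \<Longrightarrow> ref_tot \<Sigma> (Seq S1 S2) (Seq S1 S2')"
| repeat: "ref_tot \<Sigma> S S' \<Longrightarrow> ref_tot \<Sigma> (Repeat N S) (Repeat N S')"
| case_: "i < length Ms \<Longrightarrow> Ms ! i = (M, S) \<Longrightarrow> ref_tot \<Sigma> S S' \<Longrightarrow>
          ref_tot \<Sigma> (Case qs Ms) (Case qs (Ms[i := (M, S')]))"
| while: "ref_tot \<Sigma> S S' \<Longrightarrow> ref_tot \<Sigma> (While qs B S) (While qs B S')"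

definition ref_tot_star :: "('v::finite \<Rightarrow> 'a::zero set) \<Rightarrow> ('v,'a) prog \<Rightarrow> ('v,'a) prog \<Rightarrow> bool" where
  "ref_tot_star \<Sigma> = (ref_tot \<Sigma>)\<^sup>*\<^sup>*"

end

theory Submission
  imports Defs
begin


lemma opsub_apply[simp]: "opsub A C x y = A x y - C x y" by (simp add: opsub_def)
lemma opadd_apply[simp]: "opadd A C x y = A x y + C x y" by (simp add: opadd_def)
lemma opscale_apply[simp]: "opscale c A x y = c * A x y" by (simp add: opscale_def)
lemma opzero_apply[simp]: "opzero x y = 0" by (simp add: opzero_def)

lemma mmult_assoc: "mmult B (mmult B A C) D = mmult B A (mmult B C D)"
  unfolding mmult_def
  by (auto simp: sum_distrib_left sum_distrib_right mult.assoc fun_eq_iff intro: sum.swap)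

lemma mmult_opsub_right: "mmult B A (opsub C D) = opsub (mmult B A C) (mmult B A D)"
  by (simp add: mmult_def opsub_def fun_eq_iff right_diff_distrib sum_subtractf)
lemma mmult_opsub_left: "mmult B (opsub C D) A = opsub (mmult B C A) (mmult B D A)"
  by (simp add: mmult_def opsub_def fun_eq_iff left_diff_distrib sum_subtractf)
lemma mmult_opadd_right: "mmult B A (opadd C D) = opadd (mmult B A C) (mmult B A D)"
  by (simp add: mmult_def opadd_def fun_eq_iff distrib_left sum.distrib)
lemma mmult_opadd_left: "mmult B (opadd C D) A = opadd (mmult B C A) (mmult B D A)"
  by (simp add: mmult_def opadd_def fun_eq_iff distrib_right sum.distrib)
lemma mmult_opscale_right: "mmult B A (opscale c C) = opscale c (mmult B A C)"
  by (simp add: mmult_def opscale_def fun_eq_iff sum_distrib_left mult.left_commute)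
lemma mmult_opscale_left: "mmult B (opscale c C) A = opscale c (mmult B C A)"
  by (simp add: mmult_def opscale_def fun_eq_iff sum_distrib_left mult.assoc)
lemma mmult_opzero_left: "mmult B opzero A = opzero"
  by (simp add: mmult_def fun_eq_iff)
lemma mmult_opzero_right: "mmult B A opzero = opzero"
  by (simp add: mmult_def fun_eq_iff)

lemma ident_left: "finite B \<Longrightarrow> x \<in> B \<Longrightarrow> mmult B (ident B) A x y = A x y"
  unfolding mmult_def ident_def by (simp add: if_distrib[of "\<lambda>c. c * _"] sum.delta' cong: if_cong)
lemma ident_right: "finite B \<Longrightarrow> y \<in> B \<Longrightarrow> mmult B A (ident B) x y = A x y"
  unfolding mmult_def ident_def by (simp add: if_distrib[of "\<lambda>c. _ * c"] sum.delta cong: if_cong)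

lemma mmult_cong_left: "x \<in> B \<Longrightarrow> eq_on B A A' \<Longrightarrow> mmult B A X x y = mmult B A' X x y"
  by (simp add: mmult_def eq_on_def)
lemma mmult_cong_right: "(\<And>z. z \<in> B \<Longrightarrow> Y z y = Y' z y) \<Longrightarrow> mmult B A Y x y = mmult B A Y' x y"
  by (simp add: mmult_def)

definition herm :: "('v \<Rightarrow> 'a) set \<Rightarrow> ('v,'a) op \<Rightarrow> bool" where
  "herm B A \<longleftrightarrow> (\<forall>x\<in>B. \<forall>y\<in>B. A x y = cnj (A y x))"

lemma psd_herm: "psd B A \<Longrightarrow> herm B A" unfolding psd_def herm_def by blast

lemma herm_sub:
  assumes "herm B A" "herm B C" shows "herm B (opsub A C)"
  unfolding herm_def
proof (intro ballI)
  fix x y assume "x \<in> B" "y \<in> B"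
  then have "A x y = cnj (A y x)" "C x y = cnj (C y x)" using assms unfolding herm_def by blast+
  then show "opsub A C x y = cnj (opsub A C y x)" by simp
qed

lemma herm_mmult:
  assumes "herm B A" "herm B C" "x \<in> B" "y \<in> B"
  shows "mmult B A C x y = cnj (mmult B C A y x)"
proof -
  have hA: "A a b = cnj (A b a)" if "a \<in> B" "b \<in> B" for a b using assms(1) that unfolding herm_def by blast
  have hC: "C a b = cnj (C b a)" if "a \<in> B" "b \<in> B" for a b using assms(2) that unfolding herm_def by blast
  have "mmult B A C x y = (\<Sum>z\<in>B. cnj (A z x) * cnj (C y z))"
    unfolding mmult_def by (rule sum.cong[OF refl]) (metis hA hC assms(3,4))
  also have "\<dots> = cnj (mmult B C A y x)" unfolding mmult_def by (simp add: cnj_sum mult.commute)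
  finally show ?thesis .
qed

lemma herm_sq_zero:
  assumes herm: "herm B H" and fin: "finite B" and x: "x \<in> B" and z: "z \<in> B"
      and le: "Re (mmult B H H x x) \<le> 0"
  shows "H z x = 0"
proof -
  have "mmult B H H x x = (\<Sum>w\<in>B. complex_of_real ((cmod (H w x))\<^sup>2))"
    unfolding mmult_def
  proof (rule sum.cong)
    fix w assume w: "w \<in> B"
    have h: "H x w = cnj (H w x)" using herm x w unfolding herm_def by blast
    have "H x w * H w x = H w x * cnj (H w x)" using h by (simp add: mult.commute)
    also have "\<dots> = complex_of_real ((cmod (H w x))\<^sup>2)" by (rule complex_norm_square[symmetric])
    finally show "H x w * H w x = complex_of_real ((cmod (H w x))\<^sup>2)" .
  qed simp
  then have "Re (mmult B H H x x) = (\<Sum>w\<in>B. (cmod (H w x))\<^sup>2)" by simp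
  with le have "(\<Sum>w\<in>B. (cmod (H w x))\<^sup>2) = 0"
    by (metis (no_types, lifting) order_antisym sum_nonneg zero_le_power2)
  then have "\<forall>w\<in>B. (cmod (H w x))\<^sup>2 = 0"
    using fin by (subst (asm) sum_nonneg_eq_0_iff) auto
  then show ?thesis using z by simp
qed

lemma psd_diag:
  assumes S: "psd B S" and V: "herm B V" and x: "x \<in> B"
  shows "0 \<le> Re (mmult B V (mmult B S V) x x)"
proof -
  have "0 \<le> Re (\<Sum>a\<in>B. \<Sum>b\<in>B. cnj (V a x) * S a b * V b x)"
  proof -
    have "\<forall>\<psi>. 0 \<le> Re (\<Sum>x\<in>B. \<Sum>y\<in>B. cnj (\<psi> x) * S x y * \<psi> y)"
      using S unfolding psd_def by (rule conjunct2)
    from spec[OF this, of "\<lambda>b. V b x"] show ?thesis by simp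
  qed
  also have "(\<Sum>a\<in>B. \<Sum>b\<in>B. cnj (V a x) * S a b * V b x) = mmult B V (mmult B S V) x x"
    unfolding mmult_def
  proof (rule sum.cong)
    fix a assume a: "a \<in> B"
    have "V x a = cnj (V a x)" using V x a unfolding herm_def by blast
    then show "(\<Sum>b\<in>B. cnj (V a x) * S a b * V b x) = V x a * (\<Sum>b\<in>B. S a b * V b x)"
      by (simp add: sum_distrib_left mult.assoc)
  qed simp
  finally show ?thesis .
qed

lemma sqrt_proj_unique:
  assumes fin: "finite B" and S: "psd B S"
    and SS: "eq_on B (mmult B S S) P" and PP: "eq_on B (mmult B P P) P"
  shows "eq_on B S P"
proof -
  have hS: "herm B S" using S by (rule psd_herm)
  have e1: "mmult B S (mmult B S X) x y = mmult B P X x y" if "x \<in> B" for X x y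
    by (metis mmult_assoc mmult_cong_left SS that)
  have e2: "mmult B P (mmult B P X) x y = mmult B P X x y" if "x \<in> B" for X x y
    by (metis mmult_assoc mmult_cong_left PP that)
  have R4: "mmult B S (mmult B S (mmult B S (mmult B S X))) x y = mmult B S (mmult B S X) x y"
    if "x \<in> B" for X x y
  proof -
    have "mmult B S (mmult B S (mmult B S (mmult B S X))) x y = mmult B P (mmult B S (mmult B S X)) x y"
      using e1 that by blast
    also have "\<dots> = mmult B P (mmult B P X) x y"
      by (rule mmult_cong_right) (rule e1)
    also have "\<dots> = mmult B P X x y" using e2 that by blast
    also have "\<dots> = mmult B S (mmult B S X) x y" using e1 that by simp
    finally show ?thesis .
  qed
  have R4': "mmult B S (mmult B S (mmult B S S)) x y = mmult B S S x y" if "x \<in> B" "y \<in> B" for x y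
  proof -
    have "mmult B S (mmult B S (mmult B S S)) x y = mmult B P (mmult B S S) x y"
      using e1 that by blast
    also have "\<dots> = mmult B P P x y"
      by (rule mmult_cong_right) (use SS that in \<open>simp add: eq_on_def\<close>)
    also have "\<dots> = P x y" using PP that by (simp add: eq_on_def)
    also have "\<dots> = mmult B S S x y" using SS that by (simp add: eq_on_def)
    finally show ?thesis .
  qed
  define U where "U = opsub (mmult B S (mmult B S S)) S"
  have hSS: "herm B (mmult B S S)" unfolding herm_def using herm_mmult[OF hS hS] by blast
  have hS3: "herm B (mmult B S (mmult B S S))" unfolding herm_def
  proof (intro ballI)
    fix x y assume xy: "x \<in> B" "y \<in> B"
    show "mmult B S (mmult B S S) x y = cnj (mmult B S (mmult B S S) y x)"
      using herm_mmult[OF hS hSS xy] unfolding mmult_assoc .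
  qed
  have hU: "herm B U" unfolding U_def by (rule herm_sub[OF hS3 hS])
  have "U z x = 0" if "x \<in> B" "z \<in> B" for x z
  proof (rule herm_sq_zero[OF hU fin that])
    have "mmult B U U x x = 0" unfolding U_def
      using that by (simp add: mmult_opsub_left mmult_opsub_right mmult_assoc R4 R4')
    then show "Re (mmult B U U x x) \<le> 0" by simp
  qed
  then have S3: "mmult B S (mmult B S S) x y = S x y" if "x \<in> B" "y \<in> B" for x y
    using that by (simp add: U_def)
  have R3: "mmult B S (mmult B S (mmult B S X)) x y = mmult B S X x y" if "x \<in> B" for X x y
  proof -
    have "mmult B S (mmult B S (mmult B S X)) x y = mmult B (mmult B S (mmult B S S)) X x y"
      by (simp add: mmult_assoc)
    also have "\<dots> = mmult B S X x y"
      by (rule mmult_cong_left[OF that]) (simp add: eq_on_def S3)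
    finally show ?thesis .
  qed
  define V where "V = opsub S (mmult B S S)"
  have hV: "herm B V" unfolding V_def by (rule herm_sub[OF hS hSS])
  have "V z x = 0" if "x \<in> B" "z \<in> B" for x z
  proof (rule herm_sq_zero[OF hV fin that])
    have a: "mmult B V V x x = - 2 * V x x" unfolding V_def
      using that by (simp add: mmult_opsub_left mmult_opsub_right mmult_assoc R3 S3)
    have b: "mmult B V (mmult B S V) x x = 2 * V x x" unfolding V_def
      using that by (simp add: mmult_opsub_left mmult_opsub_right mmult_assoc R3 S3)
    have "0 \<le> Re (mmult B V (mmult B S V) x x)" using psd_diag[OF S hV that(1)] .
    then show "Re (mmult B V V x x) \<le> 0" using a b by simp
  qed
  then show ?thesis using SS unfolding eq_on_def V_def by auto
qed



definition agree :: "'v set \<Rightarrow> ('v \<Rightarrow> 'a) \<Rightarrow> ('v \<Rightarrow> 'a) \<Rightarrow> bool" where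
  "agree qs x y \<longleftrightarrow> (\<forall>v. v \<notin> qs \<longrightarrow> x v = y v)"

lemma lift_alt: "lift \<Sigma> qs A x y = (if x \<in> full \<Sigma> \<and> y \<in> full \<Sigma> \<and> agree qs x y
     then A (restrict x qs) (restrict y qs) else 0)"
  by (simp add: lift_def agree_def)

lemma full_mem: "x \<in> full \<Sigma> \<longleftrightarrow> (\<forall>v. x v \<in> \<Sigma> v)"
  by (simp add: bas_def PiE_UNIV_domain Pi_def)

lemma restrict_bas: "x \<in> full \<Sigma> \<Longrightarrow> restrict x qs \<in> bas \<Sigma> qs"
  by (auto simp: bas_def)

lemma lift_mult:
  assumes fin: "finite (full \<Sigma>)"
  shows "mmult (full \<Sigma>) (lift \<Sigma> qs A) (lift \<Sigma> qs C) = lift \<Sigma> qs (mmult (bas \<Sigma> qs) A C)"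
proof (intro ext)
  fix x y
  show "mmult (full \<Sigma>) (lift \<Sigma> qs A) (lift \<Sigma> qs C) x y = lift \<Sigma> qs (mmult (bas \<Sigma> qs) A C) x y"
  proof (cases "x \<in> full \<Sigma> \<and> y \<in> full \<Sigma> \<and> agree qs x y")
    case False
    have "lift \<Sigma> qs A x z * lift \<Sigma> qs C z y = 0" for z
      using False by (auto simp: lift_alt agree_def)
    then have "mmult (full \<Sigma>) (lift \<Sigma> qs A) (lift \<Sigma> qs C) x y = 0"
      by (simp only: mmult_def sum.neutral_const)
    moreover have "lift \<Sigma> qs (mmult (bas \<Sigma> qs) A C) x y = 0"
      unfolding lift_alt by (rule if_not_P[OF False])
    ultimately show ?thesis by simp
  next
    case True
    then have x: "x \<in> full \<Sigma>" and y: "y \<in> full \<Sigma>" and xy: "agree qs x y" by auto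
    define Z where "Z = {z \<in> full \<Sigma>. agree qs x z}"
    have "mmult (full \<Sigma>) (lift \<Sigma> qs A) (lift \<Sigma> qs C) x y =
          (\<Sum>z\<in>full \<Sigma>. if agree qs x z then A (restrict x qs) (restrict z qs) * C (restrict z qs) (restrict y qs) else 0)"
      unfolding mmult_def
      by (rule sum.cong) (use x y xy in \<open>auto simp: lift_alt agree_def\<close>)
    also have "\<dots> = (\<Sum>z\<in>Z. A (restrict x qs) (restrict z qs) * C (restrict z qs) (restrict y qs))"
      unfolding Z_def using fin by (simp add: sum.inter_filter)
    also have "\<dots> = (\<Sum>w\<in>bas \<Sigma> qs. A (restrict x qs) w * C w (restrict y qs))"
    proof (rule sum.reindex_bij_witness[where j = "\<lambda>z. restrict z qs" and i = "\<lambda>w v. if v \<in> qs then w v else x v"])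
      fix z assume "z \<in> Z"
      then show "(\<lambda>v. if v \<in> qs then restrict z qs v else x v) = z"
        by (auto simp: Z_def agree_def)
      show "restrict z qs \<in> bas \<Sigma> qs" using \<open>z \<in> Z\<close> by (auto simp: Z_def bas_def)
      show "A (restrict x qs) (restrict z qs) * C (restrict z qs) (restrict y qs) =
            A (restrict x qs) (restrict z qs) * C (restrict z qs) (restrict y qs)" by simp
    next
      fix w assume w: "w \<in> bas \<Sigma> qs"
      then show "restrict (\<lambda>v. if v \<in> qs then w v else x v) qs = w"
        by (auto simp: bas_def PiE_def extensional_def)
      show "(\<lambda>v. if v \<in> qs then w v else x v) \<in> Z"
        using w x by (auto simp: Z_def bas_def agree_def PiE_def Pi_def)
    qed
    also have "\<dots> = lift \<Sigma> qs (mmult (bas \<Sigma> qs) A C) x y"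
      using x y xy by (simp add: lift_alt mmult_def)
    finally show ?thesis .
  qed
qed

lemma lift_ident: "lift \<Sigma> qs (ident (bas \<Sigma> qs)) = ident (full \<Sigma>)"
proof (intro ext)
  fix x y
  show "lift \<Sigma> qs (ident (bas \<Sigma> qs)) x y = ident (full \<Sigma>) x y"
  proof (cases "x \<in> full \<Sigma> \<and> y \<in> full \<Sigma> \<and> agree qs x y")
    case True
    have "restrict x qs = restrict y qs \<longleftrightarrow> x = y"
    proof
      assume "restrict x qs = restrict y qs"
      then have "x v = y v" for v using True
        by (cases "v \<in> qs") (auto simp: agree_def dest: fun_cong[where x=v])
      then show "x = y" by auto
    qed simp
    then show ?thesis using True restrict_bas[of x \<Sigma> qs] by (simp add: lift_alt ident_def)
  next
    case False
    then show ?thesis by (auto simp: lift_alt ident_def agree_def)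
  qed
qed

lemma lift_adj: "adj (lift \<Sigma> qs A) = lift \<Sigma> qs (adj A)"
  by (auto simp: adj_def lift_alt agree_def fun_eq_iff)

lemma lift_opsub: "lift \<Sigma> qs (opsub A C) = opsub (lift \<Sigma> qs A) (lift \<Sigma> qs C)"
  by (auto simp: lift_alt fun_eq_iff)

lemma lift_cong: "eq_on (bas \<Sigma> qs) A C \<Longrightarrow> lift \<Sigma> qs A = lift \<Sigma> qs C"
  by (auto simp: lift_alt fun_eq_iff eq_on_def restrict_bas)

lemma lift_out: "x \<notin> full \<Sigma> \<or> y \<notin> full \<Sigma> \<Longrightarrow> lift \<Sigma> qs A x y = 0"
  by (auto simp: lift_alt)

lemma orth_proj_compl:
  assumes "orth_proj B P" "finite B"
  shows "orth_proj B (opsub (ident B) P)"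
proof -
  have h1: "adj P x y = P x y" "mmult B P P x y = P x y" if "x \<in> B" "y \<in> B" for x y
    using assms(1) that unfolding orth_proj_def eq_on_def by blast+
  have a: "eq_on B (adj (opsub (ident B) P)) (opsub (ident B) P)"
    unfolding eq_on_def
  proof (intro ballI)
    fix x y assume xy: "x \<in> B" "y \<in> B"
    have "cnj (P y x) = P x y" using h1(1)[OF xy] by (simp add: adj_def)
    then show "adj (opsub (ident B) P) x y = opsub (ident B) P x y"
      using xy by (simp add: adj_def ident_def)
  qed
  have b: "eq_on B (mmult B (opsub (ident B) P) (opsub (ident B) P)) (opsub (ident B) P)"
    unfolding eq_on_def
  proof (intro ballI)
    fix x y assume xy: "x \<in> B" "y \<in> B"
    show "mmult B (opsub (ident B) P) (opsub (ident B) P) x y = opsub (ident B) P x y"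
      by (simp only: mmult_opsub_left mmult_opsub_right opsub_apply ident_left[OF assms(2) xy(1)]
          ident_right[OF assms(2) xy(2)] h1(2)[OF xy]) simp
  qed
  show ?thesis using a b by (simp add: orth_proj_def)
qed

lemma orth_proj_psd:
  assumes "orth_proj B P"
  shows "psd B P"
proof -
  have herm: "P x y = cnj (P y x)" if "x \<in> B" "y \<in> B" for x y
  proof -
    from assms have "eq_on B (adj P) P" unfolding orth_proj_def by blast
    then have "adj P x y = P x y" using that unfolding eq_on_def by blast
    then show ?thesis unfolding adj_def by (rule sym)
  qed
  have PP: "P x y = (\<Sum>z\<in>B. P x z * P z y)" if "x \<in> B" "y \<in> B" for x y
  proof -
    from assms have "eq_on B (mmult B P P) P" unfolding orth_proj_def by blast
    then have "mmult B P P x y = P x y" using that unfolding eq_on_def by blast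
    then show ?thesis unfolding mmult_def by (rule sym)
  qed
  have q: "0 \<le> Re (\<Sum>x\<in>B. \<Sum>y\<in>B. cnj (\<psi> x) * P x y * \<psi> y)" for \<psi>
  proof -
    define w where "w z = (\<Sum>y\<in>B. P z y * \<psi> y)" for z
    have "(\<Sum>x\<in>B. \<Sum>y\<in>B. cnj (\<psi> x) * P x y * \<psi> y) =
          (\<Sum>x\<in>B. \<Sum>y\<in>B. \<Sum>z\<in>B. cnj (\<psi> x) * P x z * (P z y * \<psi> y))" (is "?L = _")
    proof (rule sum.cong[OF refl], rule sum.cong[OF refl])
      fix x y assume x: "x \<in> B" and y: "y \<in> B"
      show "cnj (\<psi> x) * P x y * \<psi> y = (\<Sum>z\<in>B. cnj (\<psi> x) * P x z * (P z y * \<psi> y))"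
        unfolding PP[OF x y] by (simp add: sum_distrib_left sum_distrib_right mult.assoc)
    qed
    also have "\<dots> = (\<Sum>x\<in>B. \<Sum>z\<in>B. \<Sum>y\<in>B. cnj (\<psi> x) * P x z * (P z y * \<psi> y))"
      by (rule sum.cong[OF refl]) (rule sum.swap)
    also have "\<dots> = (\<Sum>z\<in>B. \<Sum>x\<in>B. \<Sum>y\<in>B. cnj (\<psi> x) * P x z * (P z y * \<psi> y))"
      by (rule sum.swap)
    also have "\<dots> = (\<Sum>z\<in>B. (\<Sum>x\<in>B. cnj (\<psi> x) * P x z) * w z)"
      by (simp add: w_def sum_product)
    also have "\<dots> = (\<Sum>z\<in>B. cnj (w z) * w z)"
    proof (rule sum.cong[OF refl])
      fix z assume z: "z \<in> B"
      have "(\<Sum>x\<in>B. cnj (\<psi> x) * P x z) = cnj (w z)"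
        unfolding w_def cnj_sum by (rule sum.cong[OF refl]) (simp add: herm[OF _ z] mult.commute)
      then show "(\<Sum>x\<in>B. cnj (\<psi> x) * P x z) * w z = cnj (w z) * w z" by simp
    qed
    finally have eq: "?L = (\<Sum>z\<in>B. cnj (w z) * w z)" .
    have cw: "cnj (w z) * w z = complex_of_real ((cmod (w z))\<^sup>2)" for z
      by (metis complex_norm_square mult.commute)
    have "Re ?L = (\<Sum>z\<in>B. (cmod (w z))\<^sup>2)"
      unfolding eq by (simp only: cw Re_sum Re_complex_of_real)
    then show ?thesis by (simp add: sum_nonneg)
  qed
  show ?thesis unfolding psd_def using herm q by blast
qed

lemma psd_add:
  assumes A: "psd B A" and C: "psd B C" shows "psd B (opadd A C)"
  unfolding psd_def
proof (intro conjI ballI allI)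
  fix x y assume "x \<in> B" "y \<in> B"
  then have "A x y = cnj (A y x)" "C x y = cnj (C y x)" using A C unfolding psd_def by blast+
  then show "opadd A C x y = cnj (opadd A C y x)" by simp
next
  fix \<psi> :: "_ \<Rightarrow> complex"
  have "0 \<le> Re (\<Sum>x\<in>B. \<Sum>y\<in>B. cnj (\<psi> x) * A x y * \<psi> y)"
       "0 \<le> Re (\<Sum>x\<in>B. \<Sum>y\<in>B. cnj (\<psi> x) * C x y * \<psi> y)"
    using A C unfolding psd_def by blast+
  moreover have "(\<Sum>x\<in>B. \<Sum>y\<in>B. cnj (\<psi> x) * opadd A C x y * \<psi> y) =
      (\<Sum>x\<in>B. \<Sum>y\<in>B. cnj (\<psi> x) * A x y * \<psi> y) + (\<Sum>x\<in>B. \<Sum>y\<in>B. cnj (\<psi> x) * C x y * \<psi> y)"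
    by (simp add: distrib_left distrib_right sum.distrib)
  ultimately show "0 \<le> Re (\<Sum>x\<in>B. \<Sum>y\<in>B. cnj (\<psi> x) * opadd A C x y * \<psi> y)" by simp
qed

lemma psd_scale:
  assumes A: "psd B A" and c: "0 \<le> c" shows "psd B (opscale (complex_of_real c) A)"
  unfolding psd_def
proof (intro conjI ballI allI)
  fix x y assume "x \<in> B" "y \<in> B"
  then have "A x y = cnj (A y x)" using A unfolding psd_def by blast
  then show "opscale (complex_of_real c) A x y = cnj (opscale (complex_of_real c) A y x)" by simp
next
  fix \<psi> :: "_ \<Rightarrow> complex"
  have h: "0 \<le> Re (\<Sum>x\<in>B. \<Sum>y\<in>B. cnj (\<psi> x) * A x y * \<psi> y)"
    using A unfolding psd_def by blast
  have "(\<Sum>x\<in>B. \<Sum>y\<in>B. cnj (\<psi> x) * opscale (complex_of_real c) A x y * \<psi> y)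
      = complex_of_real c * (\<Sum>x\<in>B. \<Sum>y\<in>B. cnj (\<psi> x) * A x y * \<psi> y)"
    by (simp add: sum_distrib_left mult_ac)
  then show "0 \<le> Re (\<Sum>x\<in>B. \<Sum>y\<in>B. cnj (\<psi> x) * opscale (complex_of_real c) A x y * \<psi> y)"
    using h c by simp
qed

lemma psd_zero: "psd B (\<lambda>x y. 0)" by (simp add: psd_def)



locale boost =
  fixes \<Sigma> :: "'v::finite \<Rightarrow> 'a::zero set" and qs :: "'v set" and Q :: "('v,'a) op"
  assumes wf: "wf_alph \<Sigma>" and proj: "orth_proj (bas \<Sigma> qs) Q"
begin

abbreviation "Qp \<equiv> opsub (ident (bas \<Sigma> qs)) Q"
abbreviation "LQ \<equiv> lift \<Sigma> qs Q"
abbreviation "LQp \<equiv> lift \<Sigma> qs Qp"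
abbreviation "Idf \<equiv> ident (full \<Sigma>)"

definition lin :: "real \<Rightarrow> real \<Rightarrow> ('v,'a) op" where
  "lin a b = opadd (opscale (complex_of_real a) LQ) (opscale (complex_of_real b) LQp)"

lemma fin_full: "finite (full \<Sigma>)"
  using wf unfolding bas_def wf_alph_def by (intro finite_PiE) auto

lemma fin_bas: "finite (bas \<Sigma> qs)"
  using wf unfolding bas_def wf_alph_def by (intro finite_PiE) auto

lemma projQp: "orth_proj (bas \<Sigma> qs) Qp"
  by (rule orth_proj_compl[OF proj fin_bas])

lemma Qpp: "opsub (ident (bas \<Sigma> qs)) Qp = Q" by (simp add: fun_eq_iff)

lemma lift_proj:
  assumes "orth_proj (bas \<Sigma> qs) P"
  shows "adj (lift \<Sigma> qs P) = lift \<Sigma> qs P" "mmult (full \<Sigma>) (lift \<Sigma> qs P) (lift \<Sigma> qs P) = lift \<Sigma> qs P"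
  using assms by (auto simp: orth_proj_def lift_adj lift_mult[OF fin_full] intro: lift_cong)

lemma lift_orth: "orth_proj (bas \<Sigma> qs) P \<Longrightarrow> orth_proj (full \<Sigma>) (lift \<Sigma> qs P)"
  using lift_proj by (simp add: orth_proj_def eq_on_def)

lemma sqrt_lift:
  assumes P: "orth_proj (bas \<Sigma> qs) P"
  shows "op_sqrt (full \<Sigma>) (lift \<Sigma> qs P) = lift \<Sigma> qs P"
  unfolding op_sqrt_def
proof (rule the_equality)
  show "psd (full \<Sigma>) (lift \<Sigma> qs P) \<and> (\<forall>x y. x \<notin> full \<Sigma> \<or> y \<notin> full \<Sigma> \<longrightarrow> lift \<Sigma> qs P x y = 0) \<and>
        eq_on (full \<Sigma>) (mmult (full \<Sigma>) (lift \<Sigma> qs P) (lift \<Sigma> qs P)) (lift \<Sigma> qs P)"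
  proof (intro conjI)
    show "psd (full \<Sigma>) (lift \<Sigma> qs P)" by (rule orth_proj_psd[OF lift_orth[OF P]])
    show "\<forall>x y. x \<notin> full \<Sigma> \<or> y \<notin> full \<Sigma> \<longrightarrow> lift \<Sigma> qs P x y = 0"
      using lift_out by blast
    show "eq_on (full \<Sigma>) (mmult (full \<Sigma>) (lift \<Sigma> qs P) (lift \<Sigma> qs P)) (lift \<Sigma> qs P)"
      using lift_proj[OF P] by (simp add: eq_on_def)
  qed
next
  fix S assume S: "psd (full \<Sigma>) S \<and> (\<forall>x y. x \<notin> full \<Sigma> \<or> y \<notin> full \<Sigma> \<longrightarrow> S x y = 0) \<and>
        eq_on (full \<Sigma>) (mmult (full \<Sigma>) S S) (lift \<Sigma> qs P)"
  have E: "eq_on (full \<Sigma>) S (lift \<Sigma> qs P)"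
  proof (rule sqrt_proj_unique[OF fin_full])
    show "psd (full \<Sigma>) S" using S by blast
    show "eq_on (full \<Sigma>) (mmult (full \<Sigma>) S S) (lift \<Sigma> qs P)" using S by blast
    show "eq_on (full \<Sigma>) (mmult (full \<Sigma>) (lift \<Sigma> qs P) (lift \<Sigma> qs P)) (lift \<Sigma> qs P)"
      using lift_proj[OF P] by (simp add: eq_on_def)
  qed
  show "S = lift \<Sigma> qs P"
  proof (intro ext)
    fix x y show "S x y = lift \<Sigma> qs P x y"
    proof (cases "x \<in> full \<Sigma> \<and> y \<in> full \<Sigma>")
      case True then show ?thesis using E unfolding eq_on_def by blast
    next
      case False
      have "S x y = 0" using S False by blast
      moreover have "lift \<Sigma> qs P x y = 0" using lift_out False by blast
      ultimately show ?thesis by simp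
    qed
  qed
qed

lemma sandw_proj:
  "orth_proj (bas \<Sigma> qs) P \<Longrightarrow> sandw \<Sigma> qs P X = mmult (full \<Sigma>) (mmult (full \<Sigma>) (lift \<Sigma> qs P) X) (lift \<Sigma> qs P)"
  by (simp add: sandw_def sqrt_lift Let_def)

lemma LQp_eq: "LQp = opsub Idf LQ"
  by (simp add: lift_opsub lift_ident)

lemma Idf_apply: "Idf x y = LQ x y + LQp x y"
  by (simp add: LQp_eq)

lemma Id_left:
  assumes "\<And>x y. x \<notin> full \<Sigma> \<Longrightarrow> A x y = 0" shows "mmult (full \<Sigma>) Idf A = A"
proof (intro ext)
  fix x y show "mmult (full \<Sigma>) Idf A x y = A x y"
  proof (cases "x \<in> full \<Sigma>")
    case True then show ?thesis by (rule ident_left[OF fin_full])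
  next
    case False then show ?thesis using assms by (simp add: mmult_def ident_def)
  qed
qed
lemma Id_right:
  assumes "\<And>x y. y \<notin> full \<Sigma> \<Longrightarrow> A x y = 0" shows "mmult (full \<Sigma>) A Idf = A"
proof (intro ext)
  fix x y show "mmult (full \<Sigma>) A Idf x y = A x y"
  proof (cases "y \<in> full \<Sigma>")
    case True then show ?thesis by (rule ident_right[OF fin_full])
  next
    case False then show ?thesis using assms by (auto simp: mmult_def ident_def intro!: sum.neutral)
  qed
qed

lemma LQ_LQ: "mmult (full \<Sigma>) LQ LQ = LQ" using lift_proj[OF proj] by simp
lemma LQp_LQp: "mmult (full \<Sigma>) LQp LQp = LQp" using lift_proj[OF projQp] by simp
lemma LQ_LQp: "mmult (full \<Sigma>) LQ LQp = opzero"
  unfolding LQp_eq mmult_opsub_right LQ_LQ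
  by (subst Id_right) (auto simp: lift_out fun_eq_iff)
lemma LQp_LQ: "mmult (full \<Sigma>) LQp LQ = opzero"
  unfolding LQp_eq mmult_opsub_left LQ_LQ
  by (subst Id_left) (auto simp: lift_out fun_eq_iff)

lemma lin_apply: "lin a b x y = complex_of_real a * LQ x y + complex_of_real b * LQp x y"
  by (simp add: lin_def)

lemma LQ_left_lin: "mmult (full \<Sigma>) LQ (lin a b) = lin a 0"
  by (simp add: lin_def mmult_opadd_right mmult_opscale_right LQ_LQ LQ_LQp fun_eq_iff)
lemma LQp_left_lin: "mmult (full \<Sigma>) LQp (lin a b) = lin 0 b"
  by (simp add: lin_def mmult_opadd_right mmult_opscale_right LQp_LQp LQp_LQ fun_eq_iff)
lemma LQ_right_lin: "mmult (full \<Sigma>) (lin a b) LQ = lin a 0"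
  by (simp add: lin_def mmult_opadd_left mmult_opscale_left LQ_LQ LQp_LQ fun_eq_iff)
lemma LQp_right_lin: "mmult (full \<Sigma>) (lin a b) LQp = lin 0 b"
  by (simp add: lin_def mmult_opadd_left mmult_opscale_left LQp_LQp LQ_LQp fun_eq_iff)

lemma sandw_Q: "sandw \<Sigma> qs Q (lin a b) = lin a 0"
  by (simp add: sandw_proj[OF proj] LQ_left_lin LQ_right_lin)
lemma sandw_Qp: "sandw \<Sigma> qs Qp (lin a b) = lin 0 b"
  by (simp add: sandw_proj[OF projQp] LQp_left_lin LQp_right_lin)

lemma B0_Qp: "B0 \<Sigma> qs Qp (lin a b) = lin a 0"
  by (simp add: B0_def Qpp sandw_Q)
lemma B1_Qp: "B1 \<Sigma> qs Qp (lin a b) = lin 0 b"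
  by (simp add: B1_def sandw_Qp)

lemma Idf_lin: "Idf = lin 1 1" by (simp add: fun_eq_iff lin_apply Idf_apply)
lemma LQ_lin: "LQ = lin 1 0" by (simp add: fun_eq_iff lin_apply)
lemma LQp_lin: "LQp = lin 0 1" by (simp add: fun_eq_iff lin_apply)
lemma zero_lin: "opzero = lin 0 0" by (simp add: fun_eq_iff lin_apply)
lemma scale_lin: "opscale (complex_of_real c) (lin a b) = lin (c*a) (c*b)"
  by (simp add: fun_eq_iff lin_apply algebra_simps)
lemma add_lin: "opadd (lin a b) (lin c d) = lin (a+c) (b+d)"
  by (simp add: fun_eq_iff lin_apply algebra_simps)
lemma sub_lin: "opsub (lin c d) (lin a b) = lin (c-a) (d-b)"
  by (simp add: fun_eq_iff lin_apply algebra_simps)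

lemma psd_lin: "0 \<le> a \<Longrightarrow> 0 \<le> b \<Longrightarrow> psd (full \<Sigma>) (lin a b)"
  unfolding lin_def
  by (intro psd_add psd_scale orth_proj_psd lift_orth proj projQp)

lemma loewner_lin: "a \<le> c \<Longrightarrow> b \<le> d \<Longrightarrow> loewner (full \<Sigma>) (lin a b) (lin c d)"
  by (simp add: loewner_def sub_lin psd_lin)

lemma pred_lin: "0 \<le> a \<Longrightarrow> a \<le> 1 \<Longrightarrow> 0 \<le> b \<Longrightarrow> b \<le> 1 \<Longrightarrow> predicate \<Sigma> (lin a b)"
  by (simp add: predicate_def zero_lin Idf_lin loewner_lin)

lemma loewner_refl: "loewner B X X"
proof -
  have "opsub X X = (\<lambda>x y. 0)" by (simp add: fun_eq_iff)
  then show ?thesis by (simp add: loewner_def psd_zero)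
qed

lemma psd_Q: "psd (bas \<Sigma> qs) Q" by (rule orth_proj_psd[OF proj])
lemma psd_Qp: "psd (bas \<Sigma> qs) Qp" by (rule orth_proj_psd[OF projQp])

end


context boost begin

lemma setq_gen:
  assumes "t0 \<in> F"
  shows "{(f g, h g) | t g. t \<in> F \<and> g \<in> {0::nat,1}} = {(f 0, h 0), (f 1, h 1)}"
proof
  show "{(f g, h g) | t g. t \<in> F \<and> g \<in> {0::nat,1}} \<subseteq> {(f 0, h 0), (f 1, h 1)}" by auto
  show "{(f 0, h 0), (f 1, h 1)} \<subseteq> {(f g, h g) | t g. t \<in> F \<and> g \<in> {0::nat,1}}" using assms by blast
qed

lemma opsum2: "opsum {0::nat,1} f = opadd (f 0) (f 1)"
  by (simp add: opsum_def fun_eq_iff)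

lemma opsum_lt2: "opsum {..<2::nat} f = opadd (f 0) (f 1)"
  by (simp add: opsum_def fun_eq_iff numeral_2_eq_2 lessThan_Suc)

lemma opsum2': "opsum {0::nat, Suc 0} f = opadd (f 0) (f (Suc 0))"
  by (simp add: opsum_def fun_eq_iff)

lemma opsum_lt2': "opsum {..<Suc (Suc 0)} f = opadd (f 0) (f (Suc 0))"
  by (simp add: opsum_def fun_eq_iff lessThan_Suc)

lemma part_b:
  assumes e: "0 < \<epsilon>" "\<epsilon> < 1"
  shows "ref_tot_star \<Sigma> (Hole {(Idf, LQ)})
     (While qs Qp (Hole {(opscale (complex_of_real \<epsilon>) LQp, LQ), (LQp, Idf)}))"
proof -
  define r where "r n = 1 - (1 - \<epsilon>)^n" for n
  have r01: "0 \<le> r n \<and> r n \<le> 1" for n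
    using e by (simp add: r_def power_le_one)
  have rS: "r (Suc n) = (1 - r n) * \<epsilon> + r n" for n by (simp add: r_def algebra_simps)
  have rmono: "r n \<le> r (Suc n)" for n using rS[of n] r01[of n] e by simp
  have rlim: "r \<longlonglongrightarrow> 1"
  proof -
    have "(\<lambda>n. (1 - \<epsilon>)^n) \<longlonglongrightarrow> 0" using e by (intro LIMSEQ_power_zero) simp
    then have "(\<lambda>n. 1 - (1 - \<epsilon>)^n) \<longlonglongrightarrow> 1 - 0" by (intro tendsto_diff tendsto_const)
    then show ?thesis by (simp add: r_def[abs_def])
  qed
  define R where "R = (\<lambda>(s::('v,'a) spec) n. lin 0 (r n))"
  define T where "T = {(opscale (complex_of_real \<epsilon>) LQp, LQ), (LQp, Idf)}"
  define F1 where "F1 = {(R s (Suc n), opadd (B0 \<Sigma> qs Qp (snd s)) (B1 \<Sigma> qs Qp (R s n))) | s n. s \<in> {(Idf, LQ)}}"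
  define spec where "spec n = (lin 0 (r (Suc n)), lin 1 (r n))" for n
  have F1: "F1 = range spec"
    unfolding F1_def R_def spec_def by (auto simp: LQ_lin B0_Qp B1_Qp add_lin)
  have step1: "ref_tot \<Sigma> (Hole {(Idf, LQ)}) (While qs Qp (Hole F1))"
  proof (rule ref_tot.hole)
    have c1: "loewner (bas \<Sigma> qs) opzero Qp"
    proof -
      have "opsub Qp opzero = Qp" by (simp add: fun_eq_iff)
      then show ?thesis by (simp add: loewner_def psd_Qp)
    qed
    have c2: "loewner (bas \<Sigma> qs) Qp (ident (bas \<Sigma> qs))"
      by (simp add: loewner_def Qpp psd_Q)
    have c3: "R s 0 = opzero \<and> (\<forall>n. predicate \<Sigma> (R s n)) \<and>
           (\<forall>n. loewner (full \<Sigma>) (R s n) (R s (Suc n))) \<and>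
           (\<exists>Rlim. (\<forall>x\<in>full \<Sigma>. \<forall>y\<in>full \<Sigma>. (\<lambda>n. R s n x y) \<longlonglongrightarrow> Rlim x y) \<and>
              loewner (full \<Sigma>) (fst s) (opadd (B0 \<Sigma> qs Qp (snd s)) (B1 \<Sigma> qs Qp Rlim)))"
      if "s \<in> {(Idf, LQ)}" for s
    proof (intro conjI allI)
      show "R s 0 = opzero" by (simp add: R_def r_def zero_lin)
      show "predicate \<Sigma> (R s n)" for n using r01[of n] by (simp add: R_def pred_lin)
      show "loewner (full \<Sigma>) (R s n) (R s (Suc n))" for n
        using rmono[of n] by (simp add: R_def loewner_lin)
      show "\<exists>Rlim. (\<forall>x\<in>full \<Sigma>. \<forall>y\<in>full \<Sigma>. (\<lambda>n. R s n x y) \<longlonglongrightarrow> Rlim x y) \<and>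
              loewner (full \<Sigma>) (fst s) (opadd (B0 \<Sigma> qs Qp (snd s)) (B1 \<Sigma> qs Qp Rlim))"
      proof (intro exI conjI ballI)
        fix x y
        have "(\<lambda>n. complex_of_real (r n)) \<longlonglongrightarrow> complex_of_real 1" by (rule tendsto_of_real[OF rlim])
        then have "(\<lambda>n. complex_of_real (r n) * LQp x y) \<longlonglongrightarrow> complex_of_real 1 * LQp x y"
          by (rule tendsto_mult_right)
        then show "(\<lambda>n. R s n x y) \<longlonglongrightarrow> lin 0 1 x y" by (simp add: R_def lin_apply)
      next
        show "loewner (full \<Sigma>) (fst s) (opadd (B0 \<Sigma> qs Qp (snd s)) (B1 \<Sigma> qs Qp (lin 0 1)))"
          using that by (simp add: LQ_lin Idf_lin B0_Qp B1_Qp add_lin loewner_refl)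
      qed
    qed
    show "hole_ref_tot \<Sigma> {(Idf, LQ)} (While qs Qp (Hole F1))"
      unfolding hole_ref_tot_def
      apply (rule disjI2)+
      apply (rule exI[where x=qs], rule exI[where x=Qp], rule exI[where x=R])
      using c1 c2 c3 by (simp add: F1_def)
  qed
  define \<rho> where "\<rho> t = r (SOME n. t = spec n)" for t
  define pp where "pp t g = (if g = 0 then 1 - \<rho> t else \<rho> t)" for t and g :: nat
  define P' where "P' t g = (if g = 0 then opscale (complex_of_real \<epsilon>) LQp else LQp)" for t :: "('v,'a) spec" and g :: nat
  define Q' where "Q' t g = (if g = 0 then LQ else Idf)" for t :: "('v,'a) spec" and g :: nat
  have step2: "ref_tot \<Sigma> (Hole F1) (Hole T)"
  proof (rule ref_tot.hole)
    have c: "(\<forall>g\<in>{0,1}. 0 \<le> pp t g \<and> predicate \<Sigma> (P' t g) \<and> predicate \<Sigma> (Q' t g)) \<and>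
         loewner (full \<Sigma>) (fst t) (opsum {0,1} (\<lambda>g. opscale (complex_of_real (pp t g)) (P' t g))) \<and>
         loewner (full \<Sigma>) (opsum {0,1} (\<lambda>g. opscale (complex_of_real (pp t g)) (Q' t g))) (snd t)"
      if tF: "t \<in> F1" for t
    proof -
      obtain n where "t = spec n" using tF F1 by auto
      then have "\<exists>n. t = spec n" by blast
      then have tm: "t = spec (SOME n. t = spec n)" by (rule someI_ex)
      define m where "m = (SOME n. t = spec n)"
      have t: "t = spec m" using tm by (simp add: m_def)
      have rho: "\<rho> t = r m" by (simp add: \<rho>_def m_def)
      have A: "opsum {0,1} (\<lambda>g. opscale (complex_of_real (pp t g)) (P' t g)) = lin 0 ((1 - r m) * \<epsilon> + r m)"
        by (simp add: opsum2 opsum2' pp_def P'_def rho fun_eq_iff lin_apply Idf_apply algebra_simps)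
      have B: "opsum {0,1} (\<lambda>g. opscale (complex_of_real (pp t g)) (Q' t g)) = lin 1 (r m)"
        by (simp add: opsum2 opsum2' pp_def Q'_def rho fun_eq_iff lin_apply Idf_apply algebra_simps)
      have ft: "fst t = lin 0 (r (Suc m))" "snd t = lin 1 (r m)" by (simp_all add: t spec_def)
      have "0 \<le> pp t g \<and> predicate \<Sigma> (P' t g) \<and> predicate \<Sigma> (Q' t g)" if "g \<in> {0,1}" for g
        using that r01[of m] e
        by (auto simp: pp_def rho P'_def Q'_def LQp_lin LQ_lin Idf_lin scale_lin pred_lin)
      moreover have "loewner (full \<Sigma>) (fst t) (opsum {0,1} (\<lambda>g. opscale (complex_of_real (pp t g)) (P' t g)))"
        unfolding A ft(1) using rS[of m] by (simp add: loewner_lin)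
      moreover have "loewner (full \<Sigma>) (opsum {0,1} (\<lambda>g. opscale (complex_of_real (pp t g)) (Q' t g))) (snd t)"
        unfolding B ft(2) by (rule loewner_refl)
      ultimately show ?thesis by blast
    qed
    have ne: "spec 0 \<in> F1" using F1 by simp
    have setq: "T = {(P' t g, Q' t g) | t g. t \<in> F1 \<and> g \<in> {0,1}}"
      unfolding T_def P'_def Q'_def
      using setq_gen[OF ne, of "\<lambda>g. if g = 0 then opscale (complex_of_real \<epsilon>) LQp else LQp"
          "\<lambda>g. if g = 0 then LQ else Idf"] by simp
    show "hole_ref_tot \<Sigma> F1 (Hole T)"
      unfolding hole_ref_tot_def
      apply (rule disjI2, rule disjI2, rule disjI2, rule disjI2, rule disjI1)
      apply (rule exI[where x="{0,1}"], rule exI[where x=pp], rule exI[where x=P'], rule exI[where x=Q'])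
      using c setq by simp
  qed
  show ?thesis
    unfolding ref_tot_star_def T_def[symmetric]
    using step1 ref_tot.while[OF step2, of qs Qp]
    by (meson rtranclp.rtrancl_into_rtrancl rtranclp.rtrancl_refl)
qed

lemma part_a:
  assumes e: "0 < p" "p < 1" "0 < \<epsilon>" "\<epsilon> < p"
  shows "ref_tot_star \<Sigma> (Hole {(opscale (complex_of_real p) Idf, LQ), (Idf, Idf)})
     (Repeat (nat \<lceil>log (1 - \<epsilon>) (1 - p)\<rceil>)
        (IfThen \<Sigma> qs Qp (Hole {(opscale (complex_of_real \<epsilon>) LQp, LQ), (LQp, Idf)})))"
proof -
  define N where "N = nat \<lceil>log (1 - \<epsilon>) (1 - p)\<rceil>"
  have powN: "(1 - \<epsilon>)^N \<le> 1 - p"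
  proof -
    have "log (1 - \<epsilon>) (1 - p) \<le> real N" unfolding N_def by (rule real_nat_ceiling_ge)
    then have "(1 - \<epsilon>) powr real N \<le> (1 - \<epsilon>) powr log (1 - \<epsilon>) (1 - p)"
      using e by (intro powr_mono') auto
    also have "\<dots> = 1 - p" using e by simp
    finally show ?thesis using e by (simp add: powr_realpow)
  qed
  have N1: "N \<noteq> 0"
  proof
    assume "N = 0" with powN e show False by simp
  qed
  define c where "c j = 1 - (1 - \<epsilon>)^(N - j)" for j
  have c01: "0 \<le> c j \<and> c j \<le> 1" for j using e by (simp add: c_def power_le_one)
  have cS: "c j = (1 - c (Suc j)) * \<epsilon> + c (Suc j)" if "j < N" for j
  proof -
    have "N - j = Suc (N - Suc j)" using that by simp
    then show ?thesis by (simp add: c_def algebra_simps)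
  qed
  define \<gamma> where "\<gamma> s j = (if s = (Idf, Idf) then 1 else c j)" for s :: "('v,'a) spec" and j
  define R where "R s j = lin 1 (\<gamma> s j)" for s j
  define F0 where "F0 = {(opscale (complex_of_real p) Idf, LQ), (Idf, Idf)}"
  define F1 where "F1 = {(R s j, R s (Suc j)) | s j. s \<in> F0 \<and> j < N}"
  define T where "T = {(opscale (complex_of_real \<epsilon>) LQp, LQ), (LQp, Idf)}"
  define Q'' where "Q'' = opsub (ident (bas \<Sigma> qs)) Qp"
  have Q'': "Q'' = Q" by (simp add: Q''_def Qpp)
  have g01: "0 \<le> \<gamma> s j \<and> \<gamma> s j \<le> 1" for s j using c01[of j] by (simp add: \<gamma>_def)
  have step1: "ref_tot \<Sigma> (Hole F0) (Repeat N (Hole F1))"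
  proof (rule ref_tot.hole)
    have c: "(\<forall>j\<le>N. predicate \<Sigma> (R s j)) \<and>
                loewner (full \<Sigma>) (fst s) (R s 0) \<and> loewner (full \<Sigma>) (R s N) (snd s)"
      if "s \<in> F0" for s
    proof (cases "s = (Idf, Idf)")
      case True
      then show ?thesis by (simp add: R_def \<gamma>_def Idf_lin pred_lin loewner_refl)
    next
      case False
      then have s: "s = (opscale (complex_of_real p) Idf, LQ)" using that by (simp add: F0_def)
      have pc: "p \<le> c 0" using powN by (simp add: c_def)
      have gs: "\<gamma> s j = c j" for j using False by (simp add: \<gamma>_def)
      have pred: "\<forall>j\<le>N. predicate \<Sigma> (R s j)" using g01 by (simp add: R_def pred_lin)
      have l1: "loewner (full \<Sigma>) (fst s) (R s 0)"
        unfolding R_def gs using pc e by (simp add: s Idf_lin scale_lin loewner_lin)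
      have l2: "loewner (full \<Sigma>) (R s N) (snd s)"
        unfolding R_def gs by (simp add: s c_def LQ_lin loewner_refl)
      show ?thesis using pred l1 l2 by blast
    qed
    show "hole_ref_tot \<Sigma> F0 (Repeat N (Hole F1))"
      unfolding hole_ref_tot_def
      apply (rule disjI2, rule disjI2, rule disjI2, rule disjI2, rule disjI2, rule disjI1)
      apply (rule exI[where x=N], rule exI[where x=R])
      using c by (simp add: F1_def)
  qed
  define Hs where "Hs s' a = (\<exists>b. s' = (lin 1 a, lin 1 b) \<and> 0 \<le> a \<and> a \<le> 1 \<and> 0 \<le> b \<and> b \<le> 1 \<and>
                        a \<le> (1 - b) * \<epsilon> + b)" for s' a
  have Hex: "\<exists>a. Hs s' a" if sF: "s' \<in> F1" for s'
  proof -
    obtain s j where sj: "s' = (R s j, R s (Suc j))" "s \<in> F0" "j < N" using sF by (auto simp: F1_def)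
    have "Hs s' (\<gamma> s j)"
      unfolding Hs_def using g01[of s j] g01[of s "Suc j"] cS[OF sj(3)] sj(1)
      by (intro exI[where x="\<gamma> s (Suc j)"]) (auto simp: R_def \<gamma>_def)
    then show ?thesis by blast
  qed
  define \<alpha> where "\<alpha> s' = (SOME a. Hs s' a)" for s'
  have Ha: "Hs s' (\<alpha> s')" if "s' \<in> F1" for s'
    unfolding \<alpha>_def using Hex[OF that] by (rule someI_ex)
  define Pw where "Pw s' i = (if i = 0 then lin 0 (\<alpha> s') else snd s')" for s' :: "('v,'a) spec" and i :: nat
  define F2 where "F2 = (\<lambda>s. (Pw s 0, snd s)) ` F1"
  define F3 where "F3 = (\<lambda>s. (Pw s 1, snd s)) ` F1"
  have step2: "ref_tot \<Sigma> (Repeat N (Hole F1)) (Repeat N (Case qs [(Qp, Hole F2), (Q'', Hole F3)]))"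
  proof (intro ref_tot.repeat ref_tot.hole)
    have meas: "measurement \<Sigma> qs [Qp, Q'']"
      unfolding measurement_def using psd_Q psd_Qp
      by (simp add: Q'' opsum_lt2 opsum_lt2' eq_on_def)
    have c: "(\<forall>i<length [Qp, Q'']. predicate \<Sigma> (Pw s' i)) \<and>
           loewner (full \<Sigma>) (fst s') (opsum {..<length [Qp, Q'']} (\<lambda>i. sandw \<Sigma> qs ([Qp, Q''] ! i) (Pw s' i)))"
      if sF: "s' \<in> F1" for s'
    proof -
      obtain b where b: "s' = (lin 1 (\<alpha> s'), lin 1 b)" "0 \<le> \<alpha> s'" "\<alpha> s' \<le> 1" "0 \<le> b" "b \<le> 1"
        using Ha[OF sF] unfolding Hs_def by blast
      have fs: "fst s' = lin 1 (\<alpha> s')" and sn: "snd s' = lin 1 b"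
        using b(1) by (metis fst_conv, metis snd_conv)
      have l2: "length [Qp, Q''] = 2" by simp
      have i2: "i < 2 \<Longrightarrow> i = 0 \<or> i = 1" for i :: nat by auto
      show ?thesis unfolding l2
      proof (intro conjI allI impI)
        fix i :: nat assume "i < 2"
        then show "predicate \<Sigma> (Pw s' i)" using i2 b(2-5)
          by (auto simp: Pw_def sn pred_lin)
      next
        have "opsum {..<2} (\<lambda>i. sandw \<Sigma> qs ([Qp, Q''] ! i) (Pw s' i)) = lin 1 (\<alpha> s')"
          by (simp add: opsum_lt2 opsum_lt2' Pw_def Q'' sn sandw_Q sandw_Qp add_lin)
        then show "loewner (full \<Sigma>) (fst s') (opsum {..<2} (\<lambda>i. sandw \<Sigma> qs ([Qp, Q''] ! i) (Pw s' i)))"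
          by (simp add: fs loewner_refl)
      qed
    qed
    have L: "[(Qp, Hole F2), (Q'', Hole F3)] =
        map (\<lambda>i. ([Qp, Q''] ! i, Hole ((\<lambda>s. (Pw s i, snd s)) ` F1))) [0..<length [Qp, Q'']]"
      by (simp add: F2_def F3_def upt_rec)
    show "hole_ref_tot \<Sigma> F1 (Case qs [(Qp, Hole F2), (Q'', Hole F3)])"
      unfolding hole_ref_tot_def
      apply (rule disjI2, rule disjI2, rule disjI2, rule disjI2, rule disjI2, rule disjI2, rule disjI1)
      apply (rule exI[where x=qs], rule exI[where x="[Qp, Q'']"], rule exI[where x=Pw])
      using meas c L by simp
  qed
  have step3: "ref_tot \<Sigma> (Repeat N (Case qs [(Qp, Hole F2), (Q'', Hole F3)]))
                          (Repeat N (Case qs [(Qp, Hole F2), (Q'', Skip)]))"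
  proof (rule ref_tot.repeat)
    have h: "ref_tot \<Sigma> (Hole F3) Skip"
    proof (rule ref_tot.hole)
      show "hole_ref_tot \<Sigma> F3 Skip"
        unfolding hole_ref_tot_def by (rule disjI1) (auto simp: F3_def Pw_def loewner_refl)
    qed
    show "ref_tot \<Sigma> (Case qs [(Qp, Hole F2), (Q'', Hole F3)]) (Case qs [(Qp, Hole F2), (Q'', Skip)])"
      using ref_tot.case_[where i=1 and Ms="[(Qp, Hole F2), (Q'', Hole F3)]" and M=Q'' and S="Hole F3"
          and S'=Skip and qs=qs, OF _ _ h] by simp
  qed
  define G where "G t b = (\<exists>a. t = (lin 0 a, lin 1 b) \<and> 0 \<le> b \<and> b \<le> 1 \<and> a \<le> (1 - b) * \<epsilon> + b)" for t b
  have Gex: "\<exists>b. G t b" if tF: "t \<in> F2" for t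
  proof -
    obtain s' where s': "s' \<in> F1" "t = (Pw s' 0, snd s')" using tF by (auto simp: F2_def)
    obtain b where b: "s' = (lin 1 (\<alpha> s'), lin 1 b)" "0 \<le> b" "b \<le> 1" "\<alpha> s' \<le> (1 - b) * \<epsilon> + b"
      using Ha[OF s'(1)] unfolding Hs_def by blast
    have "G t b" unfolding G_def using b s'(2)
      by (intro exI[where x="\<alpha> s'"]) (auto simp: Pw_def dest: arg_cong[where f=snd])
    then show ?thesis by blast
  qed
  define \<rho> where "\<rho> t = (SOME b. G t b)" for t
  have Gr: "G t (\<rho> t)" if "t \<in> F2" for t
    unfolding \<rho>_def using Gex[OF that] by (rule someI_ex)
  define pp where "pp t g = (if g = 0 then 1 - \<rho> t else \<rho> t)" for t and g :: nat
  define P' where "P' t g = (if g = 0 then opscale (complex_of_real \<epsilon>) LQp else LQp)" for t :: "('v,'a) spec" and g :: nat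
  define Q' where "Q' t g = (if g = 0 then LQ else Idf)" for t :: "('v,'a) spec" and g :: nat
  have step4: "ref_tot \<Sigma> (Repeat N (Case qs [(Qp, Hole F2), (Q'', Skip)]))
                          (Repeat N (Case qs [(Qp, Hole T), (Q'', Skip)]))"
  proof (rule ref_tot.repeat)
    have h: "ref_tot \<Sigma> (Hole F2) (Hole T)"
    proof (rule ref_tot.hole)
      have c: "(\<forall>g\<in>{0,1}. 0 \<le> pp t g \<and> predicate \<Sigma> (P' t g) \<and> predicate \<Sigma> (Q' t g)) \<and>
           loewner (full \<Sigma>) (fst t) (opsum {0,1} (\<lambda>g. opscale (complex_of_real (pp t g)) (P' t g))) \<and>
           loewner (full \<Sigma>) (opsum {0,1} (\<lambda>g. opscale (complex_of_real (pp t g)) (Q' t g))) (snd t)"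
        if tF: "t \<in> F2" for t
      proof -
        obtain a where a: "t = (lin 0 a, lin 1 (\<rho> t))" "0 \<le> \<rho> t" "\<rho> t \<le> 1" "a \<le> (1 - \<rho> t) * \<epsilon> + \<rho> t"
          using Gr[OF tF] unfolding G_def by blast
        have A: "opsum {0,1} (\<lambda>g. opscale (complex_of_real (pp t g)) (P' t g)) = lin 0 ((1 - \<rho> t) * \<epsilon> + \<rho> t)"
          by (simp add: opsum2 opsum2' pp_def P'_def fun_eq_iff lin_apply Idf_apply algebra_simps)
        have B: "opsum {0,1} (\<lambda>g. opscale (complex_of_real (pp t g)) (Q' t g)) = lin 1 (\<rho> t)"
          by (simp add: opsum2 opsum2' pp_def Q'_def fun_eq_iff lin_apply Idf_apply algebra_simps)
        have ft: "fst t = lin 0 a" and st: "snd t = lin 1 (\<rho> t)"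
          using a(1) by (metis fst_conv, metis snd_conv)
        have "0 \<le> pp t g \<and> predicate \<Sigma> (P' t g) \<and> predicate \<Sigma> (Q' t g)" if "g \<in> {0,1}" for g
          using that a e
          by (auto simp: pp_def P'_def Q'_def LQp_lin LQ_lin Idf_lin scale_lin pred_lin)
        moreover have "loewner (full \<Sigma>) (fst t) (opsum {0,1} (\<lambda>g. opscale (complex_of_real (pp t g)) (P' t g)))"
          unfolding A ft using a(4) by (simp add: loewner_lin)
        moreover have "loewner (full \<Sigma>) (opsum {0,1} (\<lambda>g. opscale (complex_of_real (pp t g)) (Q' t g))) (snd t)"
          unfolding B st by (rule loewner_refl)
        ultimately show ?thesis by blast
      qed
      have ne: "F2 \<noteq> {}"
      proof -
        have "(R (Idf, Idf) 0, R (Idf, Idf) (Suc 0)) \<in> F1"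
          unfolding F1_def F0_def using N1 by blast
        then show ?thesis by (auto simp: F2_def)
      qed
      obtain t0 where ne': "t0 \<in> F2" using ne by blast
      have setq: "T = {(P' t g, Q' t g) | t g. t \<in> F2 \<and> g \<in> {0,1}}"
        unfolding T_def P'_def Q'_def
        using setq_gen[OF ne', of "\<lambda>g. if g = 0 then opscale (complex_of_real \<epsilon>) LQp else LQp"
            "\<lambda>g. if g = 0 then LQ else Idf"] by simp
      show "hole_ref_tot \<Sigma> F2 (Hole T)"
        unfolding hole_ref_tot_def
        apply (rule disjI2, rule disjI2, rule disjI2, rule disjI2, rule disjI1)
        apply (rule exI[where x="{0,1}"], rule exI[where x=pp], rule exI[where x=P'], rule exI[where x=Q'])
        using c setq by simp
    qed
    show "ref_tot \<Sigma> (Case qs [(Qp, Hole F2), (Q'', Skip)]) (Case qs [(Qp, Hole T), (Q'', Skip)])"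
      using ref_tot.case_[where i=0 and Ms="[(Qp, Hole F2), (Q'', Skip)]" and M=Qp and S="Hole F2"
          and S'="Hole T" and qs=qs, OF _ _ h] by simp
  qed
  have IT: "IfThen \<Sigma> qs Qp (Hole T) = Case qs [(Qp, Hole T), (Q'', Skip)]"
    by (simp add: IfThen_def IfThenElse_def Q''_def)
  show ?thesis
    unfolding ref_tot_star_def N_def[symmetric] F0_def[symmetric] T_def[symmetric] IT
    using step1 step2 step3 step4
    by (meson rtranclp.rtrancl_into_rtrancl rtranclp.rtrancl_refl)
qed

end

theorem mainTheorem6:
  fixes \<Sigma> :: "'v::finite \<Rightarrow> 'a::zero set"
    and qs :: "'v set"
    and Q :: "('v,'a) op"
  assumes wf: "wf_alph \<Sigma>"
    and proj: "orth_proj (bas \<Sigma> qs) Q"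
  defines "Qperp \<equiv> opsub (ident (bas \<Sigma> qs)) Q"
  shows
    "(\<forall>(p::real) (\<epsilon>::real). 0 < p \<and> p < 1 \<and> 0 < \<epsilon> \<and> \<epsilon> < p \<longrightarrow>
       ref_tot_star \<Sigma>
         (Hole {(opscale (complex_of_real p) (Id_full \<Sigma>), lift \<Sigma> qs Q), (Id_full \<Sigma>, Id_full \<Sigma>)})
         (Repeat (nat \<lceil>log (1 - \<epsilon>) (1 - p)\<rceil>)
            (IfThen \<Sigma> qs Qperp
               (Hole {(opscale (complex_of_real \<epsilon>) (lift \<Sigma> qs Qperp), lift \<Sigma> qs Q),
                      (lift \<Sigma> qs Qperp, Id_full \<Sigma>)}))))
   \<and> (\<forall>(\<epsilon>::real). 0 < \<epsilon> \<and> \<epsilon> < 1 \<longrightarrow>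
       ref_tot_star \<Sigma>
         (Hole {(Id_full \<Sigma>, lift \<Sigma> qs Q)})
         (While qs Qperp
            (Hole {(opscale (complex_of_real \<epsilon>) (lift \<Sigma> qs Qperp), lift \<Sigma> qs Q),
                   (lift \<Sigma> qs Qperp, Id_full \<Sigma>)})))"
  proof -
  interpret boost \<Sigma> qs Q using wf proj by unfold_locales
  show ?thesis unfolding Qperp_def
    apply (intro conjI allI impI)
     apply (rule part_a; simp)
    apply (rule part_b; simp)
    done
qed

end
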